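(* Let $p\in\mathbb R^3$, $\eta>0$, $T>\eta$, and let $v$ be as in the context. Then there is a function $\mathcal H(\tau;T,\eta)$, independent of $x$, such that for all $\tau>0$ and all $x\in B_{T-\eta}(p)\setminus\{p\}$, $$\frac{\tau^2}{4\pi}\int_{B_{T+\eta}(p)\setminus B_{T-\eta}(p)}\frac{e^{-\tau|x-y|}}{|x-y|}\big(\tau v(y,T)-\partial_tv(y,T)\big)\,dy=e^{-\tau(T-\eta)}\mathcal H(\tau;T,\eta)\frac{\sinh\tau|x-p|}{|x-p|},$$ and $\mathcal H(\tau;T,\eta)=\tau^{-1}\big(\eta+O(\tau^{-1})\big)$ as $\tau\to\infty$.
   Context: $B$ is the open ball of center $p\in\mathbb R^3$ and radius $\eta>0$, and $\Psi_B(x)=(\eta-|x-p|)\chi_B(x)$. For $t>0$, $$v(x,t)=\frac1{4\pi t}\int_{|y-x|=t}\Psi_B(y)\,dS_y,$$ which is the solution of $(\partial_t^2-\Delta)v=0$ in $\mathbb R^3\times(0,\infty)$ with $v(\cdot,0)=0$ and $\partial_tv(\cdot,0)=\Psi_B$. For $r>0$, $B_r(p)=\{x:|x-p|<r\}$. *)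

theory Defs
  imports "HOL-Analysis.Analysis" "HOL-Library.Landau_Symbols"
begin

definition sph_dir :: "real \<Rightarrow> real \<Rightarrow> real^3" where
  "sph_dir \<theta> \<phi> = vector [sin \<theta> * cos \<phi>, sin \<theta> * sin \<phi>, cos \<theta>]"

text \<open>Surface integral of f over the sphere of centre x and radius t (t > 0),
  written out in spherical coordinates (surface element t^2 sin theta).\<close>
definition sphere_integral :: "(real^3 \<Rightarrow> real) \<Rightarrow> real^3 \<Rightarrow> real \<Rightarrow> real" where
  "sphere_integral f x t =
     integral {0..pi} (\<lambda>\<theta>. integral {0..2*pi}
        (\<lambda>\<phi>. f (x + t *\<^sub>R sph_dir \<theta> \<phi>) * t\<^sup>2 * sin \<theta>))"

definition PsiB :: "real^3 \<Rightarrow> real \<Rightarrow> real^3 \<Rightarrow> real" where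
  "PsiB p \<eta> y = (if y \<in> ball p \<eta> then \<eta> - dist y p else 0)"

definition wave_v :: "real^3 \<Rightarrow> real \<Rightarrow> real^3 \<Rightarrow> real \<Rightarrow> real" where
  "wave_v p \<eta> x t = sphere_integral (PsiB p \<eta>) x t / (4 * pi * t)"

end

theory Submission
  imports Defs "HOL-Real_Asymp.Real_Asymp"
begin

lemma vec3_eq: "(w::real^3) = vector [w$1, w$2, w$3]"
  by (simp add: vec_eq_iff forall_3 vector_3)

lemma vector3_axis: "(vector [x,y,z] :: real^3) = x *\<^sub>R axis 1 1 + y *\<^sub>R axis 2 1 + z *\<^sub>R axis 3 1"
  by (simp add: vec_eq_iff forall_3 vector_3 axis_def)
lemma cbox3_image:
  "(\<lambda>(x,y,z). vector [x,y,z] :: real^3) ` cbox (a1,a2,a3) (b1,b2,b3) =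
     cbox (vector [a1,a2,a3]) (vector [b1,b2,b3])"
proof -
  have "w \<in> (\<lambda>(x,y,z). vector [x,y,z] :: real^3) ` cbox (a1,a2,a3) (b1,b2,b3)"
    if "w \<in> cbox (vector [a1,a2,a3]) (vector [b1,b2,b3])" for w
  proof -
    have "w = (\<lambda>(x,y,z). vector [x,y,z] :: real^3) (w$1,w$2,w$3)" by (simp add: vec3_eq[symmetric])
    moreover have "(w$1,w$2,w$3) \<in> cbox (a1,a2,a3) (b1,b2,b3)"
      using that unfolding mem_box_cart cbox_Pair_iff by (simp add: forall_3 vector_3)
    ultimately show ?thesis by blast
  qed
  moreover have "(\<lambda>(x,y,z). vector [x,y,z] :: real^3) ` cbox (a1,a2,a3) (b1,b2,b3) \<subseteq> cbox (vector [a1,a2,a3]) (vector [b1,b2,b3])"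
    by (clarsimp simp: cbox_Pair_iff) (simp add: mem_box_cart forall_3 vector_3)
  ultimately show ?thesis by blast
qed

lemma cbox3_image':
  "(\<lambda>w::real^3. (w$1,w$2,w$3)) ` cbox u v = cbox (u$1,u$2,u$3) (v$1,v$2,v$3)"
proof -
  have "q \<in> (\<lambda>w::real^3. (w$1,w$2,w$3)) ` cbox u v" if "q \<in> cbox (u$1,u$2,u$3) (v$1,v$2,v$3)" for q
  proof -
    obtain x y z where q: "q = (x,y,z)" by (cases q) auto
    have "vector [x,y,z] \<in> cbox u v" using that q
      unfolding mem_box_cart cbox_Pair_iff by (simp add: forall_3 vector_3)
    moreover have "q = (\<lambda>w::real^3. (w$1,w$2,w$3)) (vector [x,y,z])" using q by (simp add: vector_3)
    ultimately show ?thesis by (rule image_eqI[rotated])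
  qed
  moreover have "(\<lambda>w::real^3. (w$1,w$2,w$3)) ` cbox u v \<subseteq> cbox (u$1,u$2,u$3) (v$1,v$2,v$3)"
    by (clarsimp simp: cbox_Pair_iff) (simp add: mem_box_cart)
  ultimately show ?thesis by blast
qed

lemma content_cbox3: "Henstock_Kurzweil_Integration.content (cbox (u::real^3) v) = Henstock_Kurzweil_Integration.content {u$1..v$1} * Henstock_Kurzweil_Integration.content {u$2..v$2} * Henstock_Kurzweil_Integration.content {u$3..v$3}"
proof (cases "cbox u v = {}")
  case True
  then obtain i where "v$i < u$i" unfolding interval_eq_empty_cart(2) by blast
  then have "v$1 < u$1 \<or> v$2 < u$2 \<or> v$3 < u$3" using exhaust_3[of i] by auto
  then have "Henstock_Kurzweil_Integration.content {u$1..v$1} * Henstock_Kurzweil_Integration.content {u$2..v$2} * Henstock_Kurzweil_Integration.content {u$3..v$3} = 0"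
    by (elim disjE) (simp_all add: content_real_if)
  then show ?thesis using True by (simp only: content_empty)
next
  case False
  then have le: "\<forall>i. u$i \<le> v$i" unfolding interval_eq_empty_cart(2) not_ex not_less by blast
  have "Henstock_Kurzweil_Integration.content (cbox u v) = (\<Prod>i\<in>UNIV. v$i - u$i)"
    using False by (rule content_cbox_cart)
  also have "\<dots> = (v$1 - u$1) * (v$2 - u$2) * (v$3 - u$3)"
    unfolding UNIV_3 by simp
  finally show ?thesis using le by (simp add: content_real_if)
qed

lemma fub3:
  fixes g :: "real^3 \<Rightarrow> real"
  assumes cg: "continuous_on (cbox u v) g"
  shows "integral (cbox u v) g = integral {u$1..v$1} (\<lambda>x. integral {u$2..v$2} (\<lambda>y.
           integral {u$3..v$3} (\<lambda>z. g (vector [x,y,z]))))"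
proof -
  define V :: "real \<times> real \<times> real \<Rightarrow> real^3" where "V = (\<lambda>(x,y,z). vector [x,y,z])"
  define W :: "real^3 \<Rightarrow> real \<times> real \<times> real" where "W = (\<lambda>w. (w$1, w$2, w$3))"
  have VW: "\<And>x. W (V x) = x" by (auto simp: V_def W_def vector_3)
  have WV: "\<And>x. V (W x) = x" by (simp add: V_def W_def vec3_eq[symmetric])
  have contV: "continuous (at x) V" for x
    unfolding V_def case_prod_unfold vector3_axis
    by (intro continuous_intros) 
  have imV: "\<exists>w z. V ` cbox a b = cbox w z" for a b
  proof -
    obtain a1 a2 a3 where "a = (a1,a2,a3)" by (cases a) auto
    moreover obtain b1 b2 b3 where "b = (b1,b2,b3)" by (cases b) auto
    ultimately show ?thesis unfolding V_def using cbox3_image by blast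
  qed
  have imW: "\<exists>w z. W ` cbox a b = cbox w z" for a b
    unfolding W_def using cbox3_image' by blast
  have cont: "Henstock_Kurzweil_Integration.content (V ` cbox a b) = 1 * Henstock_Kurzweil_Integration.content (cbox a b)" for a b
  proof -
    obtain a1 a2 a3 where a: "a = (a1,a2,a3)" by (cases a) auto
    obtain b1 b2 b3 where b: "b = (b1,b2,b3)" by (cases b) auto
    show ?thesis unfolding V_def a b cbox3_image content_cbox3 content_Pair
      by (simp add: vector_3 cbox_interval)
  qed
  have int: "(g has_integral integral (cbox u v) g) (cbox u v)"
    using cg integrable_continuous by blast
  have "((\<lambda>x. g (V x)) has_integral (1/1) *\<^sub>R integral (cbox u v) g) (W ` cbox u v)"
    by (rule has_integral_twiddle[OF _ VW WV contV imV imW cont int]) simp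
  then have eq1: "integral (cbox (u$1,u$2,u$3) (v$1,v$2,v$3)) (\<lambda>x. g (V x)) = integral (cbox u v) g"
    unfolding W_def cbox3_image' by (simp add: integral_unique)
  have cgV: "continuous_on (cbox (u$1,u$2,u$3) (v$1,v$2,v$3)) (\<lambda>x. g (V x))"
  proof -
    have "V ` cbox (u$1,u$2,u$3) (v$1,v$2,v$3) = cbox u v"
      unfolding V_def cbox3_image by (simp add: vec3_eq[symmetric])
    then show ?thesis
      by (intro continuous_on_compose2[OF cg continuous_at_imp_continuous_on]) (simp_all add: contV)
  qed
  have eq2: "integral (cbox (u$1,u$2,u$3) (v$1,v$2,v$3)) (\<lambda>x. g (V x)) =
     integral (cbox (u$1) (v$1)) (\<lambda>x. integral (cbox (u$2,u$3) (v$2,v$3)) (\<lambda>y. g (V (x,y))))"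
    by (rule integral_prod_continuous[OF cgV])
  have eq3: "integral (cbox (u$2,u$3) (v$2,v$3)) (\<lambda>y. g (V (x,y))) =
     integral (cbox (u$2) (v$2)) (\<lambda>y. integral (cbox (u$3) (v$3)) (\<lambda>z. g (V (x,y,z))))"
    if "x \<in> cbox (u$1) (v$1)" for x
  proof (rule integral_prod_continuous)
    have "continuous_on (cbox (u$2,u$3) (v$2,v$3)) ((\<lambda>x. g (V x)) \<circ> (\<lambda>y. (x,y)))"
      apply (rule continuous_on_compose)
       apply (intro continuous_intros)
      apply (rule continuous_on_subset[OF cgV])
      using that by (auto simp: cbox_Pair_iff)
    then show "continuous_on (cbox (u$2,u$3) (v$2,v$3)) (\<lambda>y. g (V (x,y)))" by (simp add: o_def)
  qed
  have "integral (cbox u v) g = integral (cbox (u$1) (v$1)) (\<lambda>x. integral (cbox (u$2) (v$2)) (\<lambda>y. integral (cbox (u$3) (v$3)) (\<lambda>z. g (V (x,y,z)))))"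
    unfolding eq1[symmetric] eq2 by (rule integral_cong) (rule eq3)
  then show ?thesis
    unfolding V_def cbox_interval by simp
qed

lemma has_derivative_vec_nth' [derivative_intros]: "((\<lambda>v. v$i) has_derivative (\<lambda>h. h$i)) F"
  by (rule bounded_linear_imp_has_derivative) (rule bounded_linear_vec_nth)

lemma norm_vec3: "norm (x::real^3) = sqrt ((x$1)^2 + (x$2)^2 + (x$3)^2)"
  unfolding norm_eq_sqrt_inner inner_vec_def UNIV_3 by (simp add: power2_eq_square)

lemma norm_sph_dir [simp]: "norm (sph_dir \<theta> \<phi>) = 1"
proof -
  have "(sin \<theta> * cos \<phi>)^2 + (sin \<theta> * sin \<phi>)^2 + (cos \<theta>)^2 = (sin \<theta>)^2 * ((sin \<phi>)^2 + (cos \<phi>)^2) + (cos \<theta>)^2"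
    by (simp only: power_mult_distrib algebra_simps)
  also have "\<dots> = 1" by simp
  finally have h: "(sin \<theta> * cos \<phi>)^2 + (sin \<theta> * sin \<phi>)^2 + (cos \<theta>)^2 = 1" .
  have "norm (sph_dir \<theta> \<phi>) = sqrt ((sin \<theta> * cos \<phi>)^2 + (sin \<theta> * sin \<phi>)^2 + (cos \<theta>)^2)"
    unfolding norm_vec3 sph_dir_def by (simp only: vector_3)
  then show ?thesis using h by simp
qed

definition Pm :: "real^3 \<Rightarrow> real^3 \<Rightarrow> real^3" where
  "Pm c v = c + (v$1) *\<^sub>R sph_dir (v$2) (v$3)"

definition Dm :: "real^3 \<Rightarrow> real^3 \<Rightarrow> real^3" where
  "Dm v h = (h$1) *\<^sub>R sph_dir (v$2) (v$3)
     + (v$1 * h$2) *\<^sub>R vector [cos(v$2) * cos(v$3), cos(v$2) * sin(v$3), - sin(v$2)]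
     + (v$1 * h$3) *\<^sub>R vector [- sin(v$2) * sin(v$3), sin(v$2) * cos(v$3), 0]"

lemma Pm_axis: "Pm c = (\<lambda>v. c + (v$1 * (sin (v$2) * cos (v$3))) *\<^sub>R axis 1 1
    + (v$1 * (sin (v$2) * sin (v$3))) *\<^sub>R axis 2 1 + (v$1 * cos (v$2)) *\<^sub>R axis 3 1)"
  by (rule ext) (simp add: Pm_def sph_dir_def vec_eq_iff forall_3 vector_3 axis_def)

lemma has_derivative_Pm: "(Pm c has_derivative Dm v) (at v within S)"
  unfolding Pm_axis
  apply (rule has_derivative_eq_rhs)
   apply (rule has_derivative_add has_derivative_const has_derivative_mult has_derivative_scaleR_left has_derivative_sin has_derivative_cos has_derivative_vec_nth')+
  apply (rule ext)
  apply (simp add: Dm_def sph_dir_def vec_eq_iff forall_3 vector_3 axis_def algebra_simps)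
  done

lemma det_Dm: "det (matrix (Dm v)) = (v$1)^2 * sin (v$2)"
proof -
  have "det (matrix (Dm v)) = (v$1)^2 * sin (v$2) * (((cos (v$2))^2 + (sin (v$2))^2) * ((cos (v$3))^2 + (sin (v$3))^2))"
    unfolding det_3 by (simp add: matrix_def Dm_def sph_dir_def vector_3 axis_def algebra_simps power2_eq_square del: sin_cos_squared_add sin_cos_squared_add2 sin_cos_squared_add3)
  then show ?thesis by simp
qed

lemma Pm_inj: "inj_on (Pm c) (box (vector [a,0,0]) (vector [b, pi, 2*pi]))" if "0 \<le> a"
proof (rule inj_onI)
  fix v w assume v: "v \<in> box (vector [a,0,0]) (vector [b, pi, 2*pi])"
    and w: "w \<in> box (vector [a,0,0]) (vector [b, pi, 2*pi])" and eq: "Pm c v = Pm c w"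
  have vb: "a < v$1" "0 < v$2" "v$2 < pi" "0 < v$3" "v$3 < 2*pi"
    using v unfolding mem_box_cart forall_3 by (simp_all add: vector_3)
  have wb: "a < w$1" "0 < w$2" "w$2 < pi" "0 < w$3" "w$3 < 2*pi"
    using w unfolding mem_box_cart forall_3 by (simp_all add: vector_3)
  have e: "(v$1) *\<^sub>R sph_dir (v$2) (v$3) = (w$1) *\<^sub>R sph_dir (w$2) (w$3)"
    using eq unfolding Pm_def by simp
  have "norm ((v$1) *\<^sub>R sph_dir (v$2) (v$3)) = v$1" using vb that by simp
  moreover have "norm ((w$1) *\<^sub>R sph_dir (w$2) (w$3)) = w$1" using wb that by simp
  ultimately have r: "v$1 = w$1" using e by simp
  have "v$1 > 0" using vb that by simp
  then have s: "sph_dir (v$2) (v$3) = sph_dir (w$2) (w$3)" using e r by simp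
  have s3: "sph_dir (v$2) (v$3) $ 3 = sph_dir (w$2) (w$3) $ 3" 
   and s1: "sph_dir (v$2) (v$3) $ 1 = sph_dir (w$2) (w$3) $ 1"
   and s2: "sph_dir (v$2) (v$3) $ 2 = sph_dir (w$2) (w$3) $ 2" using s by simp_all
  from s3 have cc: "cos (v$2) = cos (w$2)" unfolding sph_dir_def vector_3 .
  have b4: "0 \<le> v$2" "v$2 \<le> pi" "0 \<le> w$2" "w$2 \<le> pi" using vb wb by linarith+
  have t: "v$2 = w$2" by (rule cos_inj_pi[OF b4 cc])
  have sp: "sin (v$2) > 0" using vb by (intro sin_gt_zero) auto
  from s1 have "sin (v$2) * cos (v$3) = sin (w$2) * cos (w$3)" unfolding sph_dir_def vector_3 .
  then have "sin (v$2) * cos (v$3) = sin (v$2) * cos (w$3)" by (simp only: t)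
  then have c3: "cos (v$3) = cos (w$3)" using sp by (simp only: mult_cancel_left) simp
  from s2 have "sin (v$2) * sin (v$3) = sin (w$2) * sin (w$3)" unfolding sph_dir_def vector_3 .
  then have "sin (v$2) * sin (v$3) = sin (v$2) * sin (w$3)" by (simp only: t)
  then have s3': "sin (v$3) = sin (w$3)" using sp by (simp only: mult_cancel_left) simp
  from c3 s3' have "sin (v$3) = sin (w$3) \<and> cos (v$3) = cos (w$3)" by simp
  then obtain n :: int where n: "v$3 = w$3 + 2 * pi * n" unfolding sin_cos_eq_iff by blast
  have "pi * real_of_int n < pi * 1" using n vb wb by linarith
  then have n1: "real_of_int n < 1" using mult_less_cancel_left_pos[OF pi_gt_zero] by blast
  have "pi * (-1) < pi * real_of_int n" using n vb wb by linarith
  then have n2: "-1 < real_of_int n" using mult_less_cancel_left_pos[OF pi_gt_zero] by blast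
  from n1 n2 have "n = 0" by linarith
  then have p: "v$3 = w$3" using n by simp
  show "v = w" using r t p by (simp add: vec_eq_iff forall_3)
qed

lemma ftc_real:
  fixes F f :: "real \<Rightarrow> real"
  assumes "a \<le> b" "\<And>x. x \<in> {a..b} \<Longrightarrow> (F has_real_derivative f x) (at x within {a..b})"
  shows "(f has_integral (F b - F a)) {a..b}"
  using assms(1) by (rule fundamental_theorem_of_calculus)
    (use assms(2) in \<open>simp add: has_real_derivative_iff_has_vector_derivative\<close>)

lemma dist_Pm: "0 \<le> v$1 \<Longrightarrow> dist (Pm c v) c = v$1"
  by (simp add: Pm_def dist_norm)

lemma dist_Pm': "0 \<le> v$1 \<Longrightarrow> dist c (Pm c v) = v$1"
  by (simp add: Pm_def dist_norm)

lemma continuous_on_Pm: "continuous_on S (Pm c)"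
  by (rule has_derivative_continuous_on) (rule has_derivative_Pm)

lemma int_const_2pi: "integral {0..2*pi} (\<lambda>z. k) = 2 * pi * k"
  by simp

lemma int_sin_0pi: "integral {0..pi} (\<lambda>y. k * sin y) = 2 * k"
proof -
  have "((\<lambda>y. k * sin y) has_integral ((- k * cos pi) - (- k * cos 0))) {0..pi}"
    by (rule ftc_real) (auto intro!: derivative_eq_intros)
  then show ?thesis by (simp add: integral_unique)
qed

lemma int_sq: "(a::real) \<le> b \<Longrightarrow> integral {a..b} (\<lambda>x. x^2 * k) = (b^3 - a^3) / 3 * k"
proof -
  assume "a \<le> b"
  then have "((\<lambda>x. x^2 * k) has_integral (b^3/3*k - a^3/3*k)) {a..b}"
    by (rule ftc_real) (auto intro!: derivative_eq_intros simp: power2_eq_square power3_eq_cube)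
  then have "integral {a..b} (\<lambda>x. x^2 * k) = b^3/3*k - a^3/3*k" by (rule integral_unique)
  then show ?thesis by (simp add: field_simps)
qed


lemma measure_ball3: "measure lebesgue (ball (c::real^3) r) = 4 / 3 * r ^ 3 * pi" if "0 \<le> r"
proof -
  have "ball c r \<in> sets lborel" by simp
  then have "measure lebesgue (ball c r) = measure lborel (ball c r)" by (rule measure_completion)
  also have "\<dots> = 4 / 3 * r ^ 3 * pi" using sphere_volume[OF that] .
  finally show ?thesis .
qed

lemma bounded_on_compact:
  fixes f :: "'a::metric_space \<Rightarrow> real"
  assumes "compact K" "continuous_on K f"
  obtains M where "\<And>x. x \<in> K \<Longrightarrow> norm (f x) \<le> M"
proof -
  have "bounded (f ` K)" using assms by (intro compact_imp_bounded compact_continuous_image)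
  then obtain M where "\<And>y. y \<in> f ` K \<Longrightarrow> norm y \<le> M" unfolding bounded_iff by blast
  then show ?thesis using that by blast
qed

lemma abs_int_cont_sub:
  fixes f :: "'a::euclidean_space \<Rightarrow> real"
  assumes "compact K" "continuous_on K f" "S \<subseteq> K" "S \<in> lmeasurable"
  shows "f absolutely_integrable_on S"
proof -
  obtain M where M: "\<And>x. x \<in> K \<Longrightarrow> norm (f x) \<le> M" using bounded_on_compact[OF assms(1,2)] by blast
  show ?thesis
  proof (rule measurable_bounded_by_integrable_imp_absolutely_integrable)
    show "f \<in> borel_measurable (lebesgue_on S)"
      using assms by (intro continuous_imp_measurable_on_sets_lebesgue continuous_on_subset[OF assms(2)])
        (auto intro: fmeasurableD)
    show "S \<in> sets lebesgue" using assms(4) by (rule fmeasurableD)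
    show "(\<lambda>x. M) integrable_on S" using assms(4) by (rule integrable_on_const)
    show "norm (f x) \<le> M" if "x \<in> S" for x using M that assms(3) by blast
  qed
qed

lemma polar:
  fixes f :: "real^3 \<Rightarrow> real"
  assumes ab: "0 < a" "a < b" and cf: "continuous_on (cball c b - ball c a) f"
  shows "integral (ball c b - ball c a) f = integral {a..b} (\<lambda>\<rho>. integral {0..pi} (\<lambda>\<theta>.
            integral {0..2*pi} (\<lambda>\<phi>. f (c + \<rho> *\<^sub>R sph_dir \<theta> \<phi>) * \<rho>^2 * sin \<theta>)))"
    and "f absolutely_integrable_on (ball c b - ball c a)"
proof -
  define lo where "lo = (vector [a,0,0] :: real^3)"
  define hi where "hi = (vector [b,pi,2*pi] :: real^3)"
  define D where "D = box lo hi"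
  define K where "K = cball c b - ball c a"
  define Sh where "Sh = ball c b - ball c a"
  define J where "J = (\<lambda>v::real^3. (v$1)^2 * sin (v$2))"
  have Dc_mem: "v \<in> cbox lo hi \<longleftrightarrow> a \<le> v$1 \<and> v$1 \<le> b \<and> 0 \<le> v$2 \<and> v$2 \<le> pi \<and> 0 \<le> v$3 \<and> v$3 \<le> 2*pi" for v
    unfolding lo_def hi_def mem_box_cart forall_3 by (simp add: vector_3)
  have D_mem: "v \<in> D \<longleftrightarrow> a < v$1 \<and> v$1 < b \<and> 0 < v$2 \<and> v$2 < pi \<and> 0 < v$3 \<and> v$3 < 2*pi" for v
    unfolding D_def lo_def hi_def mem_box_cart forall_3 by (simp add: vector_3)
  have DsubDc: "D \<subseteq> cbox lo hi" unfolding D_def by (rule box_subset_cbox)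
  have Jabs: "\<bar>det (matrix (Dm v))\<bar> = J v" if "v \<in> cbox lo hi" for v
  proof -
    have "sin (v$2) \<ge> 0" using that Dc_mem by (intro sin_ge_zero) auto
    then show ?thesis unfolding det_Dm J_def by simp
  qed
  have compK: "compact K"
  proof -
    have "closed K" unfolding K_def by (intro closed_Diff) auto
    moreover have "bounded K" unfolding K_def by (rule bounded_subset[of "cball c b"]) auto
    ultimately show ?thesis by (simp add: compact_eq_bounded_closed)
  qed
  have PmK: "Pm c v \<in> K" if "v \<in> cbox lo hi" for v
    using that Dc_mem[of v] ab unfolding K_def by (simp add: dist_Pm')
  have PmSh: "Pm c v \<in> Sh" if "v \<in> D" for v
    using that D_mem[of v] ab unfolding Sh_def by (simp add: dist_Pm')
  have contJ: "continuous_on S J" for S unfolding J_def by (intro continuous_intros)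
  have contG: "continuous_on (cbox lo hi) (\<lambda>v. J v * f (Pm c v))"
  proof (intro continuous_on_mult contJ)
    show "continuous_on (cbox lo hi) (\<lambda>v. f (Pm c v))"
      by (rule continuous_on_compose2[OF cf continuous_on_Pm]) (use PmK in \<open>auto simp: K_def\<close>)
  qed
  have Dleb: "D \<in> sets lebesgue" unfolding D_def by (rule fmeasurableD) simp
  have der: "(Pm c has_derivative Dm v) (at v within D)" if "v \<in> D" for v
    by (rule has_derivative_Pm)
  have inj: "inj_on (Pm c) D" unfolding D_def lo_def hi_def using ab by (intro Pm_inj) simp
  have intJc: "J integrable_on cbox lo hi" by (rule integrable_continuous) (rule contJ)
  have intJD: "(\<lambda>v. \<bar>det (matrix (Dm v))\<bar>) integrable_on D"
  proof (rule integrable_eq)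
    show "J integrable_on D" unfolding D_def using intJc by (simp add: integrable_on_open_interval)
    show "J v = \<bar>det (matrix (Dm v))\<bar>" if "v \<in> D" for v using Jabs that DsubDc by auto
  qed
  have PDm: "Pm c ` D \<in> lmeasurable"
    using measurable_differentiable_image_eq[OF Dleb der inj] intJD by blast
  have measPD: "measure lebesgue (Pm c ` D) = integral D (\<lambda>v. \<bar>det (matrix (Dm v))\<bar>)"
    by (rule measure_differentiable_image_eq[OF Dleb der inj intJD])
  also have "\<dots> = integral D J"
    by (rule integral_cong) (use Jabs DsubDc in auto)
  also have "\<dots> = integral (cbox lo hi) J" unfolding D_def by (rule integral_open_interval)
  also have "\<dots> = integral {a..b} (\<lambda>x. integral {0..pi} (\<lambda>y. integral {0..2*pi} (\<lambda>z. J (vector [x,y,z]))))"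
    using fub3[OF contJ] unfolding lo_def hi_def by (simp add: vector_3)
  also have "\<dots> = integral {a..b} (\<lambda>x. x^2 * (4*pi))"
  proof (rule integral_cong)
    fix x
    have "integral {0..pi} (\<lambda>y. integral {0..2*pi} (\<lambda>z. J (vector [x,y,z]))) =
          integral {0..pi} (\<lambda>y. (2*pi*x^2) * sin y)"
      by (rule integral_cong) (simp add: J_def vector_3)
    also have "\<dots> = x^2 * (4*pi)" by (simp add: int_sin_0pi)
    finally show "integral {0..pi} (\<lambda>y. integral {0..2*pi} (\<lambda>z. J (vector [x,y,z]))) = x^2 * (4*pi)" .
  qed
  also have "\<dots> = (b^3 - a^3)/3 * (4*pi)" using ab by (intro int_sq) simp
  finally have measPD': "measure lebesgue (Pm c ` D) = (b^3 - a^3)/3 * (4*pi)" .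
  have ShM: "Sh \<in> lmeasurable" unfolding Sh_def by (intro fmeasurable_Diff) (auto intro: fmeasurableD)
  have measSh: "measure lebesgue Sh = (b^3 - a^3)/3 * (4*pi)"
  proof -
    have "measure lebesgue Sh = measure lebesgue (ball c b) - measure lebesgue (ball c a)"
      unfolding Sh_def using ab by (intro measurable_measure_Diff) (auto intro: fmeasurableD)
    then show ?thesis using ab by (simp add: sphere_volume field_simps)
  qed
  have PDsub: "Pm c ` D \<subseteq> Sh" using PmSh by blast
  have negl: "negligible (Sh - Pm c ` D)"
  proof -
    have "Sh - Pm c ` D \<in> lmeasurable" using ShM PDm by (intro fmeasurable_Diff) (auto intro: fmeasurableD)
    moreover have "measure lebesgue (Sh - Pm c ` D) = 0"
      using measurable_measure_Diff[OF ShM fmeasurableD[OF PDm] PDsub] measPD' measSh by simp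
    ultimately show ?thesis by (simp add: negligible_iff_measure0)
  qed
  have ShK: "Sh \<subseteq> K" unfolding Sh_def K_def by auto
  show "f absolutely_integrable_on (ball c b - ball c a)"
    using abs_int_cont_sub[OF compK _ ShK ShM] cf unfolding K_def Sh_def by blast
  have fPD: "f absolutely_integrable_on (Pm c ` D)"
    using abs_int_cont_sub[OF compK _ _ PDm] cf PDsub ShK unfolding K_def by blast
  have cov: "(\<lambda>v. \<bar>det (matrix (Dm v))\<bar> *\<^sub>R vec (f (Pm c v)) :: real^1) absolutely_integrable_on D \<and>
        integral D (\<lambda>v. \<bar>det (matrix (Dm v))\<bar> *\<^sub>R vec (f (Pm c v)) :: real^1) = vec (integral (Pm c ` D) f)"
    using has_absolute_integral_change_of_variables[OF Dleb der inj, of "\<lambda>z. vec (f z) :: real^1" "vec (integral (Pm c ` D) f)"]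
      fPD by (simp add: absolutely_integrable_on_1_iff integral_on_1_eq[of _ "\<lambda>z. vec (f z)"])
  then have "vec (integral D (\<lambda>v. \<bar>det (matrix (Dm v))\<bar> * f (Pm c v))) = (vec (integral (Pm c ` D) f) :: real^1)"
    by (simp add: integral_on_1_eq[of D])
  then have "integral (Pm c ` D) f = integral D (\<lambda>v. \<bar>det (matrix (Dm v))\<bar> * f (Pm c v))"
    by (simp add: vec_eq_iff)
  also have "\<dots> = integral D (\<lambda>v. J v * f (Pm c v))"
    by (rule integral_cong) (use Jabs DsubDc in auto)
  also have "\<dots> = integral (cbox lo hi) (\<lambda>v. J v * f (Pm c v))" unfolding D_def by (rule integral_open_interval)
  also have "\<dots> = integral {a..b} (\<lambda>x. integral {0..pi} (\<lambda>y. integral {0..2*pi} (\<lambda>z. J (vector [x,y,z]) * f (Pm c (vector [x,y,z])))))"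
    using fub3[OF contG] unfolding lo_def hi_def by (simp add: vector_3)
  also have "\<dots> = integral {a..b} (\<lambda>\<rho>. integral {0..pi} (\<lambda>\<theta>.
            integral {0..2*pi} (\<lambda>\<phi>. f (c + \<rho> *\<^sub>R sph_dir \<theta> \<phi>) * \<rho>^2 * sin \<theta>)))"
    by (simp add: J_def Pm_def vector_3 mult_ac)
  finally have "integral (Pm c ` D) f = integral {a..b} (\<lambda>\<rho>. integral {0..pi} (\<lambda>\<theta>.
            integral {0..2*pi} (\<lambda>\<phi>. f (c + \<rho> *\<^sub>R sph_dir \<theta> \<phi>) * \<rho>^2 * sin \<theta>)))" .
  moreover have "integral (Pm c ` D) f = integral Sh f"
    by (rule integral_subset_negligible[OF PDsub negl])
  ultimately show "integral (ball c b - ball c a) f = integral {a..b} (\<lambda>\<rho>. integral {0..pi} (\<lambda>\<theta>.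
            integral {0..2*pi} (\<lambda>\<phi>. f (c + \<rho> *\<^sub>R sph_dir \<theta> \<phi>) * \<rho>^2 * sin \<theta>)))"
    unfolding Sh_def by simp
qed

definition sphS :: "(real^3 \<Rightarrow> real) \<Rightarrow> real" where
  "sphS g = integral {0..pi} (\<lambda>\<theta>. integral {0..2*pi} (\<lambda>\<phi>. g (sph_dir \<theta> \<phi>) * sin \<theta>))"

lemma cont_radial:
  assumes cg: "continuous_on (sphere 0 1) g"
  shows "continuous_on (cball 0 2 - ball 0 1) (\<lambda>z::real^3. g (z /\<^sub>R norm z))"
proof (rule continuous_on_compose2[OF cg])
  show "continuous_on (cball 0 2 - ball 0 1) (\<lambda>z::real^3. z /\<^sub>R norm z)"
    by (intro continuous_intros) auto
  show "(\<lambda>z::real^3. z /\<^sub>R norm z) ` (cball 0 2 - ball 0 1) \<subseteq> sphere 0 1"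
    by (auto intro!: left_inverse)
qed

lemma polar_radial:
  assumes cg: "continuous_on (sphere 0 1) g"
  shows "integral (ball 0 2 - ball 0 1) (\<lambda>z::real^3. g (z /\<^sub>R norm z)) = 7/3 * sphS g"
    and "(\<lambda>z::real^3. g (z /\<^sub>R norm z)) absolutely_integrable_on (ball 0 2 - ball 0 1)"
proof -
  have ab: "(0::real) < 1" "(1::real) < 2" by simp_all
  note P = polar[OF ab cont_radial[OF cg]]
  show "(\<lambda>z::real^3. g (z /\<^sub>R norm z)) absolutely_integrable_on (ball 0 2 - ball 0 1)"
    using P(2) .
  have "integral (ball 0 2 - ball 0 1) (\<lambda>z::real^3. g (z /\<^sub>R norm z)) =
     integral {1..2} (\<lambda>\<rho>. integral {0..pi} (\<lambda>\<theta>.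
            integral {0..2*pi} (\<lambda>\<phi>. g ((0 + \<rho> *\<^sub>R sph_dir \<theta> \<phi>) /\<^sub>R norm (0 + \<rho> *\<^sub>R sph_dir \<theta> \<phi>)) * \<rho>^2 * sin \<theta>)))"
    using P(1) .
  also have "\<dots> = integral {1..2} (\<lambda>\<rho>. \<rho>^2 * sphS g)"
  proof (rule integral_cong)
    fix \<rho> :: real assume "\<rho> \<in> {1..2}"
    then have rp: "\<rho> > 0" by simp
    have "integral {0..pi} (\<lambda>\<theta>. integral {0..2*pi} (\<lambda>\<phi>. g ((0 + \<rho> *\<^sub>R sph_dir \<theta> \<phi>) /\<^sub>R norm (0 + \<rho> *\<^sub>R sph_dir \<theta> \<phi>)) * \<rho>^2 * sin \<theta>))
        = integral {0..pi} (\<lambda>\<theta>. integral {0..2*pi} (\<lambda>\<phi>. (g (sph_dir \<theta> \<phi>) * sin \<theta>) * \<rho>^2))"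
      using rp by (simp add: mult_ac)
    also have "\<dots> = sphS g * \<rho>^2" unfolding sphS_def by simp
    finally show "integral {0..pi} (\<lambda>\<theta>. integral {0..2*pi} (\<lambda>\<phi>. g ((0 + \<rho> *\<^sub>R sph_dir \<theta> \<phi>) /\<^sub>R norm (0 + \<rho> *\<^sub>R sph_dir \<theta> \<phi>)) * \<rho>^2 * sin \<theta>))
        = \<rho>^2 * sphS g" by simp
  qed
  also have "\<dots> = (2^3 - 1^3)/3 * sphS g" by (rule int_sq) simp
  finally show "integral (ball 0 2 - ball 0 1) (\<lambda>z::real^3. g (z /\<^sub>R norm z)) = 7/3 * sphS g" by simp
qed

lemma sphS_rot:
  fixes g :: "real^3 \<Rightarrow> real"
  assumes cg: "continuous_on (sphere 0 1) g" and Q: "orthogonal_transformation Q"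
  shows "sphS (\<lambda>\<omega>. g (Q \<omega>)) = sphS g"
proof -
  define Sh where "Sh = ball (0::real^3) 2 - ball 0 1"
  define f1 where "f1 = (\<lambda>z::real^3. g (z /\<^sub>R norm z))"
  have nQ: "norm (Q x) = norm x" for x using Q by (rule orthogonal_transformation_norm)
  have linQ: "linear Q" using Q by (rule orthogonal_transformation_linear)
  have cgQ: "continuous_on (sphere 0 1) (\<lambda>\<omega>. g (Q \<omega>))"
    by (rule continuous_on_compose2[OF cg]) (auto simp: nQ intro: linear_continuous_on linear_conv_bounded_linear[THEN iffD1, OF linQ])
  have QSh: "Q ` Sh = Sh"
  proof
    show "Q ` Sh \<subseteq> Sh" unfolding Sh_def by (auto simp: nQ)
    show "Sh \<subseteq> Q ` Sh"
    proof
      fix x assume x: "x \<in> Sh"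
      obtain y where y: "x = Q y" using orthogonal_transformation_surj[OF Q] by (metis surjD)
      then have "y \<in> Sh" using x unfolding Sh_def by (simp add: nQ)
      then show "x \<in> Q ` Sh" using y by blast
    qed
  qed
  have f1Q: "f1 (Q z) = g (Q (z /\<^sub>R norm z))" for z
    unfolding f1_def nQ using linear_scale[OF linQ, of "inverse (norm z)" z] by simp
  have ai: "(\<lambda>z. vec (f1 z) :: real^1) absolutely_integrable_on (Q ` Sh)"
    unfolding QSh unfolding Sh_def f1_def absolutely_integrable_on_1_iff vec_component
    by (rule polar_radial(2)[OF cg])
  have "integral (Q ` Sh) (\<lambda>z. vec (f1 z) :: real^1) = \<bar>det (matrix Q)\<bar> *\<^sub>R integral Sh ((\<lambda>z. vec (f1 z)) \<circ> Q)"
    by (rule integral_change_of_variables_linear[OF linQ]) (use ai in blast)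
  then have "vec (integral Sh f1) = (vec (integral Sh (\<lambda>z. f1 (Q z))) :: real^1)"
    unfolding QSh using Q by (simp add: integral_on_1_eq[of _ "\<lambda>z. vec (f1 z)"] integral_on_1_eq[of _ "\<lambda>z. vec (f1 (Q z))"] o_def)
  then have eq: "integral Sh f1 = integral Sh (\<lambda>z. f1 (Q z))" by (simp add: vec_eq_iff)
  have "7/3 * sphS g = integral Sh f1" unfolding Sh_def f1_def using polar_radial(1)[OF cg] by simp
  also have "\<dots> = integral Sh (\<lambda>z. g (Q (z /\<^sub>R norm z)))" unfolding eq f1Q ..
  also have "\<dots> = 7/3 * sphS (\<lambda>\<omega>. g (Q \<omega>))" unfolding Sh_def using polar_radial(1)[OF cgQ] by simp
  finally show ?thesis by simp
qed

lemma sphS_theta: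
  assumes "\<And>\<theta> \<phi>. g (sph_dir \<theta> \<phi>) = h \<theta>"
  shows "sphS g = 2 * pi * integral {0..pi} (\<lambda>\<theta>. h \<theta> * sin \<theta>)"
proof -
  have "sphS g = integral {0..pi} (\<lambda>\<theta>. 2 * pi * (h \<theta> * sin \<theta>))"
    unfolding sphS_def assms by (rule integral_cong) simp
  then show ?thesis by simp
qed

lemma rot_exists:
  fixes a :: "real^3"
  obtains Q where "orthogonal_transformation Q" "Q (norm a *\<^sub>R axis (3::3) (1::real)) = a"
proof -
  have "norm (norm a *\<^sub>R axis 3 (1::real) :: real^3) = norm a" by simp
  then obtain f where f: "orthogonal_transformation f" "f (norm a *\<^sub>R axis (3::3) (1::real)) = a"
    by (rule orthogonal_transformation_exists) blast
  show ?thesis using f by (rule that)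
qed

lemma sphS_rotate:
  fixes g :: "real^3 \<Rightarrow> real" and a :: "real^3"
  assumes cg: "continuous_on (sphere 0 1) g"
  obtains Q where "orthogonal_transformation Q" "Q (norm a *\<^sub>R axis (3::3) (1::real)) = a" "sphS g = sphS (\<lambda>\<omega>. g (Q \<omega>))"
proof -
  obtain Q where Q: "orthogonal_transformation Q" "Q (norm a *\<^sub>R axis (3::3) (1::real)) = a" by (rule rot_exists)
  have "sphS g = sphS (\<lambda>\<omega>. g (Q \<omega>))" by (rule sphS_rot[OF cg Q(1), symmetric])
  with Q show ?thesis by (rule that)
qed

lemma norm_axis_sph: "norm (r *\<^sub>R axis 3 1 + t *\<^sub>R sph_dir \<theta> \<phi> :: real^3) = sqrt (r^2 + t^2 + 2*r*t* cos \<theta>)"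
proof -
  have "norm (r *\<^sub>R axis 3 1 + t *\<^sub>R sph_dir \<theta> \<phi> :: real^3) =
      sqrt ((t*(sin \<theta>* cos \<phi>))^2 + (t*(sin \<theta>* sin \<phi>))^2 + (r + t* cos \<theta>)^2)"
    unfolding norm_vec3 sph_dir_def by (simp add: vector_3 axis_def)
  also have "(t*(sin \<theta>* cos \<phi>))^2 + (t*(sin \<theta>* sin \<phi>))^2 + (r + t* cos \<theta>)^2 = r^2 + t^2 + 2*r*t* cos \<theta>"
  proof -
    have e1: "(t*(sin \<theta>* cos \<phi>))^2 + (t*(sin \<theta>* sin \<phi>))^2 = t^2 * (sin \<theta>)^2 * ((sin \<phi>)^2 + (cos \<phi>)^2)"
      by (simp only: power_mult_distrib algebra_simps)
    have e2: "(r + t* cos \<theta>)^2 = r^2 + 2*r*t* cos \<theta> + t^2*(cos \<theta>)^2"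
      by (simp only: power2_sum power_mult_distrib algebra_simps)
    have e3: "t^2 * (sin \<theta>)^2 + t^2*(cos \<theta>)^2 = t^2"
      by (metis distrib_left sin_cos_squared_add mult_1_right)
    show ?thesis using e1 e2 e3 by simp
  qed
  finally show ?thesis .
qed

definition psi :: "real \<Rightarrow> real \<Rightarrow> real" where "psi \<eta> s = max (\<eta> - s) 0"
definition Phi :: "real \<Rightarrow> real \<Rightarrow> real" where "Phi \<eta> s = integral {0..s} (\<lambda>u. u * psi \<eta> u)"

lemma cont_psi: "continuous_on S (psi \<eta>)"
  unfolding psi_def by (intro continuous_intros)

lemma cont_upsi: "continuous_on S (\<lambda>u. u * psi \<eta> u)"
  by (intro continuous_intros cont_psi)

lemma PsiB_psi: "PsiB p \<eta> z = psi \<eta> (norm (z - p))"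
  by (simp add: PsiB_def psi_def dist_norm norm_minus_commute)

lemma Phi_deriv: "0 < s \<Longrightarrow> (Phi \<eta> has_real_derivative s * psi \<eta> s) (at s)"
proof -
  assume s: "0 < s"
  have "((\<lambda>x. integral {0..x} (\<lambda>u. u * psi \<eta> u)) has_real_derivative s * psi \<eta> s) (at s within {0..s+1})"
    by (rule integral_has_real_derivative[OF cont_upsi]) (use s in simp)
  moreover have "at s within {0..s+1} = at s"
    by (rule at_within_interior) (use s in simp)
  ultimately show ?thesis unfolding Phi_def by simp
qed

lemma Phi_cont: "continuous_on {0..M} (Phi \<eta>)"
  unfolding Phi_def by (rule indefinite_integral_continuous_1) (rule integrable_continuous_real[OF cont_upsi])

lemma Phi_small: assumes "0 \<le> s" "s \<le> \<eta>" shows "Phi \<eta> s = \<eta>* s^2/2 - s^3/3"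
proof -
  have "Phi \<eta> s = integral {0..s} (\<lambda>u. \<eta>*u - u^2)"
    unfolding Phi_def by (rule integral_cong) (use assms in \<open>auto simp: psi_def power2_eq_square algebra_simps\<close>)
  also have "\<dots> = (\<eta>* s^2/2 - s^3/3) - (\<eta>*0^2/2 - 0^3/3)"
    by (rule integral_unique, rule ftc_real) (use assms in \<open>auto intro!: derivative_eq_intros simp: power2_eq_square power3_eq_cube\<close>)
  finally show ?thesis by simp
qed

lemma Phi_big: assumes "\<eta> \<le> s" "0 < \<eta>" shows "Phi \<eta> s = \<eta>^3/6"
proof -
  have int: "(\<lambda>u. u * psi \<eta> u) integrable_on {0..s}" by (rule integrable_continuous_real[OF cont_upsi])
  have "Phi \<eta> s = integral {0..\<eta>} (\<lambda>u. u * psi \<eta> u) + integral {\<eta>..s} (\<lambda>u. u * psi \<eta> u)"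
    unfolding Phi_def by (rule Henstock_Kurzweil_Integration.integral_combine[symmetric]) (use assms int in auto)
  also have "integral {\<eta>..s} (\<lambda>u. u * psi \<eta> u) = integral {\<eta>..s} (\<lambda>u. 0)"
    by (rule integral_cong) (auto simp: psi_def)
  also have "integral {0..\<eta>} (\<lambda>u. u * psi \<eta> u) = Phi \<eta> \<eta>" unfolding Phi_def ..
  also have "\<dots> = \<eta>^3/6" using assms by (simp add: Phi_small power2_eq_square power3_eq_cube)
  finally show ?thesis by simp
qed


lemma ftc_theta:
  assumes r: "0 < r" and t: "0 < t"
  shows "((\<lambda>\<theta>. psi \<eta> (sqrt (r^2 + t^2 + 2 * r * t * cos \<theta>)) * sin \<theta>) has_integral
           (Phi \<eta> (r + t) - Phi \<eta> \<bar>r - t\<bar>) / (r * t)) {0..pi}"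
proof -
  define q where "q = (\<lambda>\<theta>. r^2 + t^2 + 2 * r * t * cos \<theta>)"
  define F where "F = (\<lambda>\<theta>. - Phi \<eta> (sqrt (q \<theta>)) / (r * t))"
  have rt: "0 < r * t" using r t by simp
  have qeq: "q \<theta> = (r - t)^2 + 2 * r * t * (1 + cos \<theta>)" for \<theta>
    unfolding q_def by (simp add: power2_diff algebra_simps)
  have qeq2: "q \<theta> = (r + t)^2 - 2 * r * t * (1 - cos \<theta>)" for \<theta>
    unfolding q_def by (simp add: power2_sum algebra_simps)
  have qge: "(r - t)^2 \<le> q \<theta>" for \<theta>
  proof -
    have c1: "0 \<le> 1 + cos \<theta>" using cos_ge_minus_one[of \<theta>] by linarith
    have "0 \<le> 2 * r * t * (1 + cos \<theta>)" using r t c1 by (intro mult_nonneg_nonneg) auto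
    then show ?thesis using qeq[of \<theta>] by linarith
  qed
  have qle: "q \<theta> \<le> (r + t)^2" for \<theta>
  proof -
    have c1: "0 \<le> 1 - cos \<theta>" using cos_le_one[of \<theta>] by linarith
    have "0 \<le> 2 * r * t * (1 - cos \<theta>)" using r t c1 by (intro mult_nonneg_nonneg) auto
    then show ?thesis using qeq2[of \<theta>] by linarith
  qed
  have q0: "q 0 = (r + t)^2" unfolding q_def by (simp add: power2_sum)
  have qpi: "q pi = (r - t)^2" unfolding q_def by (simp add: power2_diff)
  have cont: "continuous_on {0..pi} F"
  proof -
    have "continuous_on {0..pi} (\<lambda>\<theta>. Phi \<eta> (sqrt (q \<theta>)))"
    proof (rule continuous_on_compose2[OF Phi_cont[of "r + t"]])
      show "continuous_on {0..pi} (\<lambda>\<theta>. sqrt (q \<theta>))" unfolding q_def by (intro continuous_intros)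
      show "(\<lambda>\<theta>. sqrt (q \<theta>)) ` {0..pi} \<subseteq> {0..r + t}"
      proof clarify
        fix \<theta> have "0 \<le> q \<theta>" using qge[of \<theta>] by (meson order_trans zero_le_power2)
        moreover have "sqrt (q \<theta>) \<le> sqrt ((r+t)^2)" using qle[of \<theta>] by (rule real_sqrt_le_mono)
        ultimately show "sqrt (q \<theta>) \<in> {0..r+t}" using r t by simp
      qed
    qed
    then show ?thesis unfolding F_def using rt by (intro continuous_intros) auto
  qed
  have der: "(F has_vector_derivative (psi \<eta> (sqrt (q \<theta>)) * sin \<theta>)) (at \<theta>)" if th: "\<theta> \<in> {0<..<pi}" for \<theta>
  proof -
    have "cos pi < cos \<theta>" using th by (intro cos_monotone_0_pi) auto
    then have c: "-1 < cos \<theta>" by simp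
    have "(r - t)^2 < q \<theta>"
    proof -
      have c1: "0 < 1 + cos \<theta>" using c by linarith
      have "0 < 2 * r * t * (1 + cos \<theta>)" using r t c1 by (intro mult_pos_pos) auto
      then show ?thesis using qeq[of \<theta>] by linarith
    qed
    then have qpos: "0 < q \<theta>" by (meson le_less_trans zero_le_power2)
    define s where "s = sqrt (q \<theta>)"
    have spos: "0 < s" unfolding s_def using qpos by simp
    have dq: "(q has_real_derivative (- 2 * r * t * sin \<theta>)) (at \<theta>)"
      unfolding q_def by (auto intro!: derivative_eq_intros)
    have d1: "((\<lambda>\<theta>. sqrt (q \<theta>)) has_real_derivative (inverse (sqrt (q \<theta>)) / 2 * (- 2 * r * t * sin \<theta>))) (at \<theta>)"
      by (rule DERIV_chain2[OF DERIV_real_sqrt[OF qpos] dq])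
    have d2: "((\<lambda>\<theta>. Phi \<eta> (sqrt (q \<theta>))) has_real_derivative (s * psi \<eta> s) * (inverse s / 2 * (- 2 * r * t * sin \<theta>))) (at \<theta>)"
      unfolding s_def by (rule DERIV_chain2[OF Phi_deriv d1]) (use spos s_def in simp)
    have d3: "(F has_real_derivative - ((s * psi \<eta> s) * (inverse s / 2 * (- 2 * r * t * sin \<theta>))) / (r * t)) (at \<theta>)"
      unfolding F_def by (intro DERIV_cdivide DERIV_minus d2)
    have "- ((s * psi \<eta> s) * (inverse s / 2 * (- 2 * r * t * sin \<theta>))) / (r * t) = psi \<eta> s * sin \<theta>"
      using spos r t by (simp add: field_simps)
    then show ?thesis using d3 unfolding s_def by (simp add: has_real_derivative_iff_has_vector_derivative)
  qed
  have "((\<lambda>\<theta>. psi \<eta> (sqrt (q \<theta>)) * sin \<theta>) has_integral (F pi - F 0)) {0..pi}"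
    by (rule fundamental_theorem_of_calculus_interior_strong[of "{}"]) (use cont der in auto)
  moreover have "F pi - F 0 = (Phi \<eta> (r + t) - Phi \<eta> \<bar>r - t\<bar>) / (r * t)"
    unfolding F_def q0 qpi using r t by (simp add: field_simps)
  ultimately show ?thesis unfolding q_def by simp
qed

lemma orth_comb:
  assumes Q: "orthogonal_transformation Q"
  shows "Q u + t *\<^sub>R Q w = Q (u + t *\<^sub>R w)"
proof -
  have l: "linear Q" using Q by (rule orthogonal_transformation_linear)
  show ?thesis using linear_add[OF l] linear_scale[OF l] by simp
qed

lemma wave_v_formula:
  assumes t: "0 < t" and y: "y \<noteq> p"
  shows "wave_v p \<eta> y t = (Phi \<eta> (dist y p + t) - Phi \<eta> \<bar>dist y p - t\<bar>) / (2 * dist y p)"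
proof -
  define r where "r = dist y p"
  have r: "0 < r" unfolding r_def using y by simp
  have rn: "norm (y - p) = r" unfolding r_def by (simp add: dist_norm)
  define g where "g = (\<lambda>\<omega>. psi \<eta> (norm ((y - p) + t *\<^sub>R \<omega>)))"
  have cg: "continuous_on (sphere 0 1) g" unfolding g_def
    by (rule continuous_on_compose2[OF cont_psi]) (auto intro!: continuous_intros)
  have "sphere_integral (PsiB p \<eta>) y t = integral {0..pi} (\<lambda>\<theta>. integral {0..2*pi} (\<lambda>\<phi>. (g (sph_dir \<theta> \<phi>) * sin \<theta>) * t^2))"
    unfolding sphere_integral_def g_def PsiB_psi by (simp add: algebra_simps)
  also have "\<dots> = sphS g * t^2" unfolding sphS_def by simp
  finally have si: "sphere_integral (PsiB p \<eta>) y t = sphS g * t^2" .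
  obtain Q where Q: "orthogonal_transformation Q" "Q (norm (y - p) *\<^sub>R axis (3::3) (1::real)) = y - p"
    and eqQ: "sphS g = sphS (\<lambda>\<omega>. g (Q \<omega>))"
    by (rule sphS_rotate[OF cg])
  have gQ: "g (Q \<omega>) = psi \<eta> (norm (r *\<^sub>R axis (3::3) (1::real) + t *\<^sub>R \<omega>))" for \<omega>
  proof -
    have "g (Q \<omega>) = psi \<eta> (norm (Q (r *\<^sub>R axis (3::3) (1::real)) + t *\<^sub>R Q \<omega>))"
      unfolding g_def using Q(2) rn by simp
    also have "\<dots> = psi \<eta> (norm (Q (r *\<^sub>R axis (3::3) (1::real) + t *\<^sub>R \<omega>)))"
      by (simp add: orth_comb[OF Q(1)])
    also have "\<dots> = psi \<eta> (norm (r *\<^sub>R axis (3::3) (1::real) + t *\<^sub>R \<omega>))"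
      by (simp add: orthogonal_transformation_norm[OF Q(1)])
    finally show ?thesis .
  qed
  have "sphS (\<lambda>\<omega>. g (Q \<omega>)) = 2 * pi * integral {0..pi} (\<lambda>\<theta>. psi \<eta> (sqrt (r^2 + t^2 + 2 * r * t * cos \<theta>)) * sin \<theta>)"
    by (rule sphS_theta) (simp add: gQ norm_axis_sph)
  also have "\<dots> = 2 * pi * ((Phi \<eta> (r + t) - Phi \<eta> \<bar>r - t\<bar>) / (r * t))"
    using integral_unique[OF ftc_theta[OF r t]] by simp
  finally have "sphS g = 2 * pi * ((Phi \<eta> (r + t) - Phi \<eta> \<bar>r - t\<bar>) / (r * t))" using eqQ by simp
  then show ?thesis unfolding wave_v_def si r_def[symmetric] using r t by (simp add: field_simps power2_eq_square)
qed


lemma wave_v_deriv: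
  assumes T: "0 < T" and y: "y \<noteq> p" and rT: "dist y p \<noteq> T"
  shows "deriv (\<lambda>t. wave_v p \<eta> y t) T =
     ((dist y p + T) * psi \<eta> (dist y p + T) - (T - dist y p) * psi \<eta> \<bar>dist y p - T\<bar>) / (2 * dist y p)"
proof -
  define r where "r = dist y p"
  have r: "0 < r" unfolding r_def using y by simp
  have dA: "((\<lambda>t. Phi \<eta> (r + t)) has_real_derivative (r + T) * psi \<eta> (r + T) * 1) (at T)"
  proof (rule DERIV_chain2[OF Phi_deriv])
    show "0 < r + T" using r T by simp
    show "((\<lambda>t. r + t) has_real_derivative 1) (at T)" by (auto intro!: derivative_eq_intros)
  qed
  show ?thesis
  proof (cases "T < r")
    case True
    have dB: "((\<lambda>t. Phi \<eta> (r - t)) has_real_derivative (r - T) * psi \<eta> (r - T) * (-1)) (at T)"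
    proof (rule DERIV_chain2[OF Phi_deriv])
      show "0 < r - T" using True by simp
      show "((\<lambda>t. r - t) has_real_derivative -1) (at T)" by (auto intro!: derivative_eq_intros)
    qed
    have d: "((\<lambda>t. (Phi \<eta> (r + t) - Phi \<eta> (r - t)) / (2 * r)) has_real_derivative
       ((r + T) * psi \<eta> (r + T) * 1 - (r - T) * psi \<eta> (r - T) * (-1)) / (2 * r)) (at T)"
      by (intro DERIV_cdivide DERIV_diff dA dB)
    have "((\<lambda>t. wave_v p \<eta> y t) has_real_derivative
       ((r + T) * psi \<eta> (r + T) * 1 - (r - T) * psi \<eta> (r - T) * (-1)) / (2 * r)) (at T)"
    proof (rule has_field_derivative_transform_within_open[OF d, of "{0<..<r}"])
      show "T \<in> {0<..<r}" using T True by simp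
      show "(Phi \<eta> (r + t) - Phi \<eta> (r - t)) / (2 * r) = wave_v p \<eta> y t" if "t \<in> {0<..<r}" for t
        using that wave_v_formula[of t y p \<eta>] y unfolding r_def by simp
    qed simp
    moreover have "\<bar>r - T\<bar> = r - T" using True by simp
    ultimately show ?thesis unfolding r_def[symmetric] by (simp add: DERIV_imp_deriv algebra_simps)
  next
    case False
    then have F: "r < T" using rT unfolding r_def by simp
    have dB: "((\<lambda>t. Phi \<eta> (t - r)) has_real_derivative (T - r) * psi \<eta> (T - r) * 1) (at T)"
    proof (rule DERIV_chain2[OF Phi_deriv])
      show "0 < T - r" using F by simp
      show "((\<lambda>t. t - r) has_real_derivative 1) (at T)" by (auto intro!: derivative_eq_intros)
    qed
    have d: "((\<lambda>t. (Phi \<eta> (r + t) - Phi \<eta> (t - r)) / (2 * r)) has_real_derivative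
       ((r + T) * psi \<eta> (r + T) * 1 - (T - r) * psi \<eta> (T - r) * 1) / (2 * r)) (at T)"
      by (intro DERIV_cdivide DERIV_diff dA dB)
    have "((\<lambda>t. wave_v p \<eta> y t) has_real_derivative
       ((r + T) * psi \<eta> (r + T) * 1 - (T - r) * psi \<eta> (T - r) * 1) / (2 * r)) (at T)"
    proof (rule has_field_derivative_transform_within_open[OF d, of "{r<..}"])
      show "T \<in> {r<..}" using F by simp
      show "(Phi \<eta> (r + t) - Phi \<eta> (t - r)) / (2 * r) = wave_v p \<eta> y t" if "t \<in> {r<..}" for t
      proof -
        have "0 < t" using that r by simp
        moreover have "\<bar>r - t\<bar> = t - r" using that by simp
        ultimately show ?thesis using wave_v_formula[of t y p \<eta>] y unfolding r_def by simp
      qed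
    qed simp
    moreover have "\<bar>r - T\<bar> = T - r" using F by simp
    ultimately show ?thesis unfolding r_def[symmetric] by (simp add: DERIV_imp_deriv)
  qed
qed

lemma ftc_kernel:
  assumes \<tau>: "0 < \<tau>" and d: "0 < d" and \<rho>: "d < \<rho>"
  shows "((\<lambda>\<theta>. exp (- \<tau> * sqrt (d^2 + (-\<rho>)^2 + 2 * d * (-\<rho>) * cos \<theta>)) / sqrt (d^2 + (-\<rho>)^2 + 2 * d * (-\<rho>) * cos \<theta>) * sin \<theta>)
     has_integral 2 * exp (- \<tau> * \<rho>) * sinh (\<tau> * d) / (\<tau> * \<rho> * d)) {0..pi}"
proof -
  define q where "q = (\<lambda>\<theta>. d^2 + (-\<rho>)^2 + 2 * d * (-\<rho>) * cos \<theta>)"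
  define G where "G = (\<lambda>\<theta>. - exp (- \<tau> * sqrt (q \<theta>)) / (\<tau> * \<rho> * d))"
  have rp: "0 < \<rho>" using d \<rho> by simp
  have qeq: "q \<theta> = (\<rho> - d)^2 + 2 * \<rho> * d * (1 - cos \<theta>)" for \<theta>
    unfolding q_def by (simp add: power2_diff algebra_simps)
  have qpos: "0 < q \<theta>" for \<theta>
  proof -
    have c1: "0 \<le> 1 - cos \<theta>" using cos_le_one[of \<theta>] by linarith
    have "0 \<le> 2 * \<rho> * d * (1 - cos \<theta>)" using rp d c1 by (intro mult_nonneg_nonneg) auto
    moreover have "0 < (\<rho> - d)^2" using \<rho> by simp
    ultimately show ?thesis using qeq[of \<theta>] by linarith
  qed
  have der: "(G has_real_derivative exp (- \<tau> * sqrt (q \<theta>)) / sqrt (q \<theta>) * sin \<theta>) (at \<theta> within {0..pi})" for \<theta>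
  proof -
    define s where "s = sqrt (q \<theta>)"
    have spos: "0 < s" unfolding s_def using qpos by simp
    have dq: "(q has_real_derivative (2 * d * \<rho> * sin \<theta>)) (at \<theta>)"
      unfolding q_def by (auto intro!: derivative_eq_intros)
    have d1: "((\<lambda>\<theta>. sqrt (q \<theta>)) has_real_derivative (inverse (sqrt (q \<theta>)) / 2 * (2 * d * \<rho> * sin \<theta>))) (at \<theta>)"
      by (rule DERIV_chain2[OF DERIV_real_sqrt[OF qpos] dq])
    have d2: "((\<lambda>\<theta>. exp (- \<tau> * sqrt (q \<theta>))) has_real_derivative
        exp (- \<tau> * s) * (- \<tau> * (inverse s / 2 * (2 * d * \<rho> * sin \<theta>)))) (at \<theta>)"
      unfolding s_def by (rule DERIV_chain2[OF DERIV_exp]) (intro DERIV_cmult d1)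
    have d3: "(G has_real_derivative - (exp (- \<tau> * s) * (- \<tau> * (inverse s / 2 * (2 * d * \<rho> * sin \<theta>)))) / (\<tau> * \<rho> * d)) (at \<theta>)"
      unfolding G_def by (intro DERIV_cdivide DERIV_minus d2)
    have "- (exp (- \<tau> * s) * (- \<tau> * (inverse s / 2 * (2 * d * \<rho> * sin \<theta>)))) / (\<tau> * \<rho> * d)
          = exp (- \<tau> * s) / s * sin \<theta>"
      using spos \<tau> d rp by (simp add: field_simps)
    then show ?thesis using d3 unfolding s_def by (simp add: has_field_derivative_at_within)
  qed
  have "((\<lambda>\<theta>. exp (- \<tau> * sqrt (q \<theta>)) / sqrt (q \<theta>) * sin \<theta>) has_integral (G pi - G 0)) {0..pi}"
    by (rule ftc_real) (use der in auto)
  moreover have "G pi - G 0 = 2 * exp (- \<tau> * \<rho>) * sinh (\<tau> * d) / (\<tau> * \<rho> * d)"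
  proof -
    have "q pi = (\<rho> + d)^2" unfolding q_def by (simp add: power2_sum algebra_simps)
    then have a: "sqrt (q pi) = \<rho> + d" using rp d by simp
    have "q 0 = (\<rho> - d)^2" unfolding q_def by (simp add: power2_diff algebra_simps)
    then have b: "sqrt (q 0) = \<rho> - d" using \<rho> by simp
    have e1: "exp (- \<tau> * (\<rho> + d)) = exp (- \<tau> * \<rho>) * exp (- (\<tau> * d))"
      by (simp add: algebra_simps flip: exp_add)
    have e2: "exp (- \<tau> * (\<rho> - d)) = exp (- \<tau> * \<rho>) * exp (\<tau> * d)"
      by (simp add: algebra_simps flip: exp_add)
    show ?thesis unfolding G_def a b e1 e2 sinh_def using \<tau> d rp by (simp add: field_simps)
  qed
  ultimately show ?thesis unfolding q_def by simp
qed

lemma kernel_sphS: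
  fixes a :: "real^3"
  assumes \<tau>: "0 < \<tau>" and d: "0 < norm a" and \<rho>: "norm a < \<rho>"
  shows "sphS (\<lambda>\<omega>. exp (- \<tau> * norm (a - \<rho> *\<^sub>R \<omega>)) / norm (a - \<rho> *\<^sub>R \<omega>)) =
     4 * pi * exp (- \<tau> * \<rho>) * sinh (\<tau> * norm a) / (\<tau> * \<rho> * norm a)"
proof -
  define g where "g = (\<lambda>\<omega>. exp (- \<tau> * norm (a - \<rho> *\<^sub>R \<omega>)) / norm (a - \<rho> *\<^sub>R \<omega>))"
  have nz: "norm (a - \<rho> *\<^sub>R \<omega>) \<noteq> 0" if "\<omega> \<in> sphere 0 1" for \<omega>
  proof -
    have "0 < \<rho>" using \<rho> d by linarith
    then have "norm (\<rho> *\<^sub>R \<omega>) = \<rho>" using that by simp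
    then have "norm a < norm (\<rho> *\<^sub>R \<omega>)" using \<rho> by simp
    then show ?thesis by (metis eq_iff_diff_eq_0 norm_eq_zero order_less_irrefl)
  qed
  have cg: "continuous_on (sphere 0 1) g" unfolding g_def
    by (intro continuous_intros) (use nz in auto)
  obtain Q where Q: "orthogonal_transformation Q" "Q (norm a *\<^sub>R axis (3::3) (1::real)) = a"
    and eqQ: "sphS g = sphS (\<lambda>\<omega>. g (Q \<omega>))"
    by (rule sphS_rotate[OF cg])
  have gQ: "g (Q \<omega>) = exp (- \<tau> * norm (norm a *\<^sub>R axis (3::3) (1::real) + (-\<rho>) *\<^sub>R \<omega>)) / norm (norm a *\<^sub>R axis (3::3) (1::real) + (-\<rho>) *\<^sub>R \<omega>)" for \<omega>
  proof -
    have "a - \<rho> *\<^sub>R Q \<omega> = Q (norm a *\<^sub>R axis (3::3) (1::real)) + (-\<rho>) *\<^sub>R Q \<omega>" using Q(2) by simp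
    also have "\<dots> = Q (norm a *\<^sub>R axis (3::3) (1::real) + (-\<rho>) *\<^sub>R \<omega>)" by (rule orth_comb[OF Q(1)])
    finally have "norm (a - \<rho> *\<^sub>R Q \<omega>) = norm (norm a *\<^sub>R axis (3::3) (1::real) + (-\<rho>) *\<^sub>R \<omega>)"
      by (simp add: orthogonal_transformation_norm[OF Q(1)])
    then show ?thesis unfolding g_def by simp
  qed
  have "sphS (\<lambda>\<omega>. g (Q \<omega>)) = 2 * pi * integral {0..pi} (\<lambda>\<theta>.
      exp (- \<tau> * sqrt ((norm a)^2 + (-\<rho>)^2 + 2 * norm a * (-\<rho>) * cos \<theta>)) / sqrt ((norm a)^2 + (-\<rho>)^2 + 2 * norm a * (-\<rho>) * cos \<theta>) * sin \<theta>)"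
    by (rule sphS_theta) (simp only: gQ norm_axis_sph)
  also have "\<dots> = 2 * pi * (2 * exp (- \<tau> * \<rho>) * sinh (\<tau> * norm a) / (\<tau> * \<rho> * norm a))"
    using integral_unique[OF ftc_kernel[OF \<tau> d \<rho>]] by simp
  finally show ?thesis using eqQ unfolding g_def by simp
qed

definition Rpoly :: "real \<Rightarrow> real \<Rightarrow> real \<Rightarrow> real \<Rightarrow> real \<Rightarrow> real \<Rightarrow> real" where
  "Rpoly \<tau> c0 c1 c2 c3 u = (c0/\<tau> + c1/\<tau>^2 + 2*c2/\<tau>^3 + 6*c3/\<tau>^4) + (c1/\<tau> + 2*c2/\<tau>^2 + 6*c3/\<tau>^3) * u
     + (c2/\<tau> + 3*c3/\<tau>^2) * u^2 + (c3/\<tau>) * u^3"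

lemma cubic_deriv:
  "((\<lambda>\<rho>. a0 + a1 * (\<rho> - h) + a2 * (\<rho> - h)^2 + a3 * (\<rho> - h)^3) has_real_derivative
     a1 + 2 * a2 * (\<rho> - h) + 3 * a3 * (\<rho> - h)^2) (at \<rho> within S)"
  by (auto intro!: derivative_eq_intros simp: power2_eq_square)

lemma Rpoly_deriv:
  assumes "\<tau> \<noteq> 0"
  shows "((\<lambda>\<rho>. - exp (- \<tau> * \<rho>) * Rpoly \<tau> c0 c1 c2 c3 (\<rho> - h)) has_real_derivative
     exp (- \<tau> * \<rho>) * (c0 + c1 * (\<rho> - h) + c2 * (\<rho> - h)^2 + c3 * (\<rho> - h)^3)) (at \<rho> within S)"
proof -
  define a0 where "a0 = c0/\<tau> + c1/\<tau>^2 + 2*c2/\<tau>^3 + 6*c3/\<tau>^4"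
  define a1 where "a1 = c1/\<tau> + 2*c2/\<tau>^2 + 6*c3/\<tau>^3"
  define a2 where "a2 = c2/\<tau> + 3*c3/\<tau>^2"
  define a3 where "a3 = c3/\<tau>"
  define u where "u = \<rho> - h"
  have R: "Rpoly \<tau> c0 c1 c2 c3 v = a0 + a1 * v + a2 * v^2 + a3 * v^3" for v
    unfolding Rpoly_def a0_def a1_def a2_def a3_def ..
  have dE: "((\<lambda>\<rho>. - exp (- \<tau> * \<rho>)) has_real_derivative (\<tau> * exp (- \<tau> * \<rho>))) (at \<rho> within S)"
    by (auto intro!: derivative_eq_intros)
  have d: "((\<lambda>\<rho>. - exp (- \<tau> * \<rho>) * (a0 + a1 * (\<rho> - h) + a2 * (\<rho> - h)^2 + a3 * (\<rho> - h)^3)) has_real_derivative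
     (- exp (- \<tau> * \<rho>)) * (a1 + 2 * a2 * (\<rho> - h) + 3 * a3 * (\<rho> - h)^2) + (\<tau> * exp (- \<tau> * \<rho>)) * (a0 + a1 * (\<rho> - h) + a2 * (\<rho> - h)^2 + a3 * (\<rho> - h)^3)) (at \<rho> within S)"
    by (rule DERIV_mult'[OF dE cubic_deriv])
  have c0: "\<tau> * a0 - a1 = c0" and c1: "\<tau> * a1 - 2 * a2 = c1" and c2: "\<tau> * a2 - 3 * a3 = c2" and c3: "\<tau> * a3 = c3"
    unfolding a0_def a1_def a2_def a3_def using assms by (simp_all add: field_simps power2_eq_square power3_eq_cube power4_eq_xxxx)
  have "(- exp (- \<tau> * \<rho>)) * (a1 + 2 * a2 * u + 3 * a3 * u^2) + (\<tau> * exp (- \<tau> * \<rho>)) * (a0 + a1 * u + a2 * u^2 + a3 * u^3)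
      = exp (- \<tau> * \<rho>) * ((\<tau> * a0 - a1) + (\<tau> * a1 - 2 * a2) * u + (\<tau> * a2 - 3 * a3) * u^2 + (\<tau> * a3) * u^3)"
    by (simp add: algebra_simps)
  also have "\<dots> = exp (- \<tau> * \<rho>) * (c0 + c1 * u + c2 * u^2 + c3 * u^3)" unfolding c0 c1 c2 c3 ..
  finally show ?thesis using d unfolding R u_def by simp
qed

lemma ftc_poly_exp:
  assumes "\<tau> \<noteq> 0" "a \<le> b"
  shows "((\<lambda>\<rho>. exp (- \<tau> * \<rho>) * (c0 + c1 * (\<rho> - h) + c2 * (\<rho> - h)^2 + c3 * (\<rho> - h)^3)) has_integral
     ((- exp (- \<tau> * b) * Rpoly \<tau> c0 c1 c2 c3 (b - h)) - (- exp (- \<tau> * a) * Rpoly \<tau> c0 c1 c2 c3 (a - h)))) {a..b}"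
  by (rule ftc_real[OF assms(2)]) (rule Rpoly_deriv[OF assms(1)])


definition Vf :: "real \<Rightarrow> real \<Rightarrow> real \<Rightarrow> real" where
  "Vf \<eta> T r = (Phi \<eta> (r + T) - Phi \<eta> \<bar>r - T\<bar>) / (2 * r)"
definition Wf :: "real \<Rightarrow> real \<Rightarrow> real \<Rightarrow> real" where
  "Wf \<eta> T r = ((r + T) * psi \<eta> (r + T) - (T - r) * psi \<eta> \<bar>r - T\<bar>) / (2 * r)"

lemma integrand_left:
  assumes \<eta>: "0 < \<eta>" "\<eta> < T" and \<rho>: "T - \<eta> \<le> \<rho>" "\<rho> \<le> T"
  shows "\<rho> * (\<tau> * Vf \<eta> T \<rho> - Wf \<eta> T \<rho>) * exp (- \<tau> * \<rho>) =
    exp (- \<tau> * \<rho>) * (\<tau> * \<eta>^3/12 + (-\<eta>/2) * (\<rho> - T) + (-(\<tau> * \<eta>/4) - 1/2) * (\<rho> - T)^2 + (-\<tau>/6) * (\<rho> - T)^3)"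
proof -
  define u where "u = \<rho> - T"
  have rp: "0 < \<rho>" using \<eta> \<rho> by simp
  have p1: "Phi \<eta> (\<rho> + T) = \<eta>^3/6" using \<eta> \<rho> by (intro Phi_big) auto
  have p2: "psi \<eta> (\<rho> + T) = 0" using \<eta> \<rho> by (simp add: psi_def)
  have a: "\<bar>\<rho> - T\<bar> = -u" using \<rho> unfolding u_def by simp
  have p3: "Phi \<eta> (-u) = \<eta> * (-u)^2/2 - (-u)^3/3" using \<eta> \<rho> unfolding u_def by (intro Phi_small) auto
  have p4: "psi \<eta> (-u) = \<eta> + u" using \<eta> \<rho> unfolding u_def psi_def by simp
  have "\<rho> * (\<tau> * Vf \<eta> T \<rho> - Wf \<eta> T \<rho>) = (\<tau> * (\<eta>^3/6 - (\<eta> * (-u)^2/2 - (-u)^3/3)) + (-u) * (\<eta> + u)) / 2"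
    unfolding Vf_def Wf_def p1 p2 a p3 p4 using rp by (simp add: field_simps u_def)
  also have "\<dots> = \<tau> * \<eta>^3/12 + (-\<eta>/2) * u + (-(\<tau> * \<eta>/4) - 1/2) * u^2 + (-\<tau>/6) * u^3"
    by (simp add: field_simps power2_eq_square power3_eq_cube)
  finally show ?thesis unfolding u_def by simp
qed

lemma integrand_right:
  assumes \<eta>: "0 < \<eta>" "\<eta> < T" and \<rho>: "T \<le> \<rho>" "\<rho> \<le> T + \<eta>"
  shows "\<rho> * (\<tau> * Vf \<eta> T \<rho> - Wf \<eta> T \<rho>) * exp (- \<tau> * \<rho>) =
    exp (- \<tau> * \<rho>) * (\<tau> * \<eta>^3/12 + (-\<eta>/2) * (\<rho> - T) + (1/2 - \<tau> * \<eta>/4) * (\<rho> - T)^2 + (\<tau>/6) * (\<rho> - T)^3)"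
proof -
  define u where "u = \<rho> - T"
  have rp: "0 < \<rho>" using \<eta> \<rho> by simp
  have p1: "Phi \<eta> (\<rho> + T) = \<eta>^3/6" using \<eta> \<rho> by (intro Phi_big) auto
  have p2: "psi \<eta> (\<rho> + T) = 0" using \<eta> \<rho> by (simp add: psi_def)
  have a: "\<bar>\<rho> - T\<bar> = u" using \<rho> unfolding u_def by simp
  have p3: "Phi \<eta> u = \<eta> * u^2/2 - u^3/3" using \<eta> \<rho> unfolding u_def by (intro Phi_small) auto
  have p4: "psi \<eta> u = \<eta> - u" using \<eta> \<rho> unfolding u_def psi_def by simp
  have "\<rho> * (\<tau> * Vf \<eta> T \<rho> - Wf \<eta> T \<rho>) = (\<tau> * (\<eta>^3/6 - (\<eta> * u^2/2 - u^3/3)) + (-u) * (\<eta> - u)) / 2"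
    unfolding Vf_def Wf_def p1 p2 a p3 p4 using rp by (simp add: field_simps u_def)
  also have "\<dots> = \<tau> * \<eta>^3/12 + (-\<eta>/2) * u + (1/2 - \<tau> * \<eta>/4) * u^2 + (\<tau>/6) * u^3"
    by (simp add: field_simps power2_eq_square power3_eq_cube)
  finally show ?thesis unfolding u_def by simp
qed


lemma J_closed:
  assumes \<tau>: "0 < \<tau>" and \<eta>: "0 < \<eta>" "\<eta> < T"
  shows "exp (\<tau> * (T - \<eta>)) * integral {T-\<eta>..T+\<eta>} (\<lambda>\<rho>. \<rho> * (\<tau> * Vf \<eta> T \<rho> - Wf \<eta> T \<rho>) * exp (- \<tau> * \<rho>))
     = 4 * exp (- \<tau> * \<eta>) / \<tau>^3 + \<eta> / \<tau>^2 - 2 / \<tau>^3 - exp (- \<tau> * (2 * \<eta>)) * (\<eta> / \<tau>^2 + 2 / \<tau>^3)"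
proof -
  define g where "g = (\<lambda>\<rho>. \<rho> * (\<tau> * Vf \<eta> T \<rho> - Wf \<eta> T \<rho>) * exp (- \<tau> * \<rho>))"
  define R1 where "R1 = Rpoly \<tau> (\<tau> * \<eta>^3/12) (-\<eta>/2) (-(\<tau> * \<eta>/4) - 1/2) (-\<tau>/6)"
  define R2 where "R2 = Rpoly \<tau> (\<tau> * \<eta>^3/12) (-\<eta>/2) (1/2 - \<tau> * \<eta>/4) (\<tau>/6)"
  have tn: "\<tau> \<noteq> 0" using \<tau> by simp
  have L: "(g has_integral ((- exp (- \<tau> * T) * R1 (T - T)) - (- exp (- \<tau> * (T - \<eta>)) * R1 ((T - \<eta>) - T)))) {T-\<eta>..T}"
    unfolding R1_def
  proof (rule has_integral_eq[OF _ ftc_poly_exp[OF tn]])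
    show "T - \<eta> \<le> T" using \<eta> by simp
    show "exp (- \<tau> * x) * (\<tau> * \<eta>^3/12 + (-\<eta>/2) * (x - T) + (-(\<tau> * \<eta>/4) - 1/2) * (x - T)^2 + (-\<tau>/6) * (x - T)^3) = g x"
      if "x \<in> {T-\<eta>..T}" for x
      unfolding g_def using integrand_left[OF \<eta>, of x \<tau>] that by simp
  qed
  have R: "(g has_integral ((- exp (- \<tau> * (T + \<eta>)) * R2 ((T + \<eta>) - T)) - (- exp (- \<tau> * T) * R2 (T - T)))) {T..T+\<eta>}"
    unfolding R2_def
  proof (rule has_integral_eq[OF _ ftc_poly_exp[OF tn]])
    show "T \<le> T + \<eta>" using \<eta> by simp
    show "exp (- \<tau> * x) * (\<tau> * \<eta>^3/12 + (-\<eta>/2) * (x - T) + (1/2 - \<tau> * \<eta>/4) * (x - T)^2 + (\<tau>/6) * (x - T)^3) = g x"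
      if "x \<in> {T..T+\<eta>}" for x
      unfolding g_def using integrand_right[OF \<eta>, of x \<tau>] that by simp
  qed
  have "(g has_integral ((- exp (- \<tau> * T) * R1 (T - T)) - (- exp (- \<tau> * (T - \<eta>)) * R1 ((T - \<eta>) - T)))
     + ((- exp (- \<tau> * (T + \<eta>)) * R2 ((T + \<eta>) - T)) - (- exp (- \<tau> * T) * R2 (T - T)))) {T-\<eta>..T+\<eta>}"
    by (rule has_integral_combine[OF _ _ L R]) (use \<eta> in auto)
  then have I: "integral {T-\<eta>..T+\<eta>} g = (- exp (- \<tau> * T) * R1 0) + exp (- \<tau> * (T - \<eta>)) * R1 (-\<eta>)
     - exp (- \<tau> * (T + \<eta>)) * R2 \<eta> + exp (- \<tau> * T) * R2 0"
    by (simp add: integral_unique)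
  have v1: "R1 0 = (\<eta>^3/6 - 2 * \<eta> / \<tau>^2 - 4 / \<tau>^3) / 2"
    unfolding R1_def Rpoly_def using tn by (simp add: field_simps power2_eq_square power3_eq_cube power4_eq_xxxx)
  have v2: "R1 (-\<eta>) = (2 * \<eta> / \<tau>^2 - 4 / \<tau>^3) / 2"
    unfolding R1_def Rpoly_def using tn by (simp add: field_simps power2_eq_square power3_eq_cube power4_eq_xxxx)
  have v3: "R2 \<eta> = (2 * \<eta> / \<tau>^2 + 4 / \<tau>^3) / 2"
    unfolding R2_def Rpoly_def using tn by (simp add: field_simps power2_eq_square power3_eq_cube power4_eq_xxxx)
  have v4: "R2 0 = (\<eta>^3/6 - 2 * \<eta> / \<tau>^2 + 4 / \<tau>^3) / 2"
    unfolding R2_def Rpoly_def using tn by (simp add: field_simps power2_eq_square power3_eq_cube power4_eq_xxxx)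
  have e1: "exp (\<tau> * (T - \<eta>)) * exp (- \<tau> * T) = exp (- \<tau> * \<eta>)"
    by (simp add: algebra_simps flip: exp_add)
  have e2: "exp (\<tau> * (T - \<eta>)) * exp (- \<tau> * (T - \<eta>)) = 1"
    by (simp flip: exp_add)
  have e3: "exp (\<tau> * (T - \<eta>)) * exp (- \<tau> * (T + \<eta>)) = exp (- \<tau> * (2 * \<eta>))"
    by (simp add: algebra_simps flip: exp_add)
  have "exp (\<tau> * (T - \<eta>)) * integral {T-\<eta>..T+\<eta>} g =
     - (exp (\<tau> * (T - \<eta>)) * exp (- \<tau> * T)) * R1 0 + (exp (\<tau> * (T - \<eta>)) * exp (- \<tau> * (T - \<eta>))) * R1 (-\<eta>)
     - (exp (\<tau> * (T - \<eta>)) * exp (- \<tau> * (T + \<eta>))) * R2 \<eta> + (exp (\<tau> * (T - \<eta>)) * exp (- \<tau> * T)) * R2 0"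
    unfolding I by (simp add: algebra_simps)
  also have "\<dots> = - exp (- \<tau> * \<eta>) * R1 0 + R1 (-\<eta>) - exp (- \<tau> * (2 * \<eta>)) * R2 \<eta> + exp (- \<tau> * \<eta>) * R2 0"
    unfolding e1 e2 e3 by simp
  also have "\<dots> = 4 * exp (- \<tau> * \<eta>) / \<tau>^3 + \<eta> / \<tau>^2 - 2 / \<tau>^3 - exp (- \<tau> * (2 * \<eta>)) * (\<eta> / \<tau>^2 + 2 / \<tau>^3)"
    unfolding v1 v2 v3 v4 by (simp add: field_simps)
  finally show ?thesis unfolding g_def .
qed

lemma asym_part:
  fixes f :: "real \<Rightarrow> real"
  assumes \<eta>: "0 < \<eta>"
    and eq: "\<And>\<tau>. 0 < \<tau> \<Longrightarrow> f \<tau> = 4 * exp (- \<tau> * \<eta>) / \<tau> - 2 / \<tau> - exp (- \<tau> * (2 * \<eta>)) * (\<eta> + 2 / \<tau>)"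
  shows "f \<in> O[at_top](\<lambda>\<tau>. 1 / \<tau>)"
proof -
  have g: "(\<lambda>\<tau>::real. 4 * exp (- \<tau> * \<eta>) / \<tau> - 2 / \<tau> - exp (- \<tau> * (2 * \<eta>)) * (\<eta> + 2 / \<tau>)) \<in> O[at_top](\<lambda>\<tau>. 1 / \<tau>)"
    using \<eta> by real_asymp
  have ev: "eventually (\<lambda>\<tau>. f \<tau> = 4 * exp (- \<tau> * \<eta>) / \<tau> - 2 / \<tau> - exp (- \<tau> * (2 * \<eta>)) * (\<eta> + 2 / \<tau>)) at_top"
    using eventually_gt_at_top[of 0] by eventually_elim (rule eq)
  show ?thesis by (subst landau_o.big.in_cong[OF ev]) (rule g)
qed

lemma Vf_cont:
  assumes "0 < a" "a \<le> b" "\<And>y. y \<in> K \<Longrightarrow> a \<le> dist y p \<and> dist y p \<le> b" "0 < T"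
  shows "continuous_on K (\<lambda>y. Vf \<eta> T (dist y p))"
proof -
  have c1: "continuous_on K (\<lambda>y. Phi \<eta> (dist y p + T))"
  proof (rule continuous_on_compose2[OF Phi_cont[of "b + T"]])
    show "continuous_on K (\<lambda>y. dist y p + T)" by (intro continuous_intros)
    show "(\<lambda>y. dist y p + T) ` K \<subseteq> {0..b + T}" using assms by force
  qed
  have c2: "continuous_on K (\<lambda>y. Phi \<eta> \<bar>dist y p - T\<bar>)"
  proof (rule continuous_on_compose2[OF Phi_cont[of "b + T"]])
    show "continuous_on K (\<lambda>y. \<bar>dist y p - T\<bar>)" by (intro continuous_intros)
    show "(\<lambda>y. \<bar>dist y p - T\<bar>) ` K \<subseteq> {0..b + T}" using assms by force
  qed
  have nz: "\<forall>y\<in>K. 2 * dist y p \<noteq> 0" using assms by force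
  show ?thesis unfolding Vf_def by (intro continuous_intros c1 c2 nz)
qed

lemma Wf_cont:
  assumes "\<And>y. y \<in> K \<Longrightarrow> 0 < dist y p"
  shows "continuous_on K (\<lambda>y. Wf \<eta> T (dist y p))"
proof -
  have c1: "continuous_on K (\<lambda>y. psi \<eta> (dist y p + T))"
    by (rule continuous_on_compose2[OF cont_psi[of UNIV]]) (auto intro!: continuous_intros)
  have c2: "continuous_on K (\<lambda>y. psi \<eta> \<bar>dist y p - T\<bar>)"
    by (rule continuous_on_compose2[OF cont_psi[of UNIV]]) (auto intro!: continuous_intros)
  have nz: "\<forall>y\<in>K. 2 * dist y p \<noteq> 0" using assms by force
  show ?thesis unfolding Wf_def by (intro continuous_intros c1 c2 nz)
qed

theorem lemma2p2:
  fixes p :: "real^3" and \<eta> T :: real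
  assumes "\<eta> > 0" and "T > \<eta>"
  shows "\<exists>H :: real \<Rightarrow> real.
     (\<forall>\<tau>>0. \<forall>x \<in> ball p (T - \<eta>) - {p}.
        \<tau>\<^sup>2 / (4 * pi) *
          integral (ball p (T + \<eta>) - ball p (T - \<eta>))
            (\<lambda>y. exp (- \<tau> * dist x y) / dist x y *
                  (\<tau> * wave_v p \<eta> y T - deriv (\<lambda>t. wave_v p \<eta> y t) T))
        = exp (- \<tau> * (T - \<eta>)) * H \<tau> * (sinh (\<tau> * dist x p) / dist x p))
   \<and> (\<lambda>\<tau>. \<tau> * H \<tau> - \<eta>) \<in> O[at_top](\<lambda>\<tau>. 1 / \<tau>)"
proof -
  note \<eta> = assms
  define J where "J = (\<lambda>\<tau>. integral {T-\<eta>..T+\<eta>} (\<lambda>\<rho>. \<rho> * (\<tau> * Vf \<eta> T \<rho> - Wf \<eta> T \<rho>) * exp (- \<tau> * \<rho>)))"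
  define H where "H = (\<lambda>\<tau>. \<tau> * exp (\<tau> * (T - \<eta>)) * J \<tau>)"
  have part2: "(\<lambda>\<tau>. \<tau> * H \<tau> - \<eta>) \<in> O[at_top](\<lambda>\<tau>. 1 / \<tau>)"
  proof (rule asym_part[OF \<eta>(1)])
    fix \<tau> :: real assume \<tau>: "0 < \<tau>"
    have "\<tau> * H \<tau> - \<eta> = \<tau>^2 * (exp (\<tau> * (T - \<eta>)) * J \<tau>) - \<eta>"
      unfolding H_def by (simp add: power2_eq_square)
    also have "\<dots> = \<tau>^2 * (4 * exp (- \<tau> * \<eta>) / \<tau>^3 + \<eta> / \<tau>^2 - 2 / \<tau>^3 - exp (- \<tau> * (2 * \<eta>)) * (\<eta> / \<tau>^2 + 2 / \<tau>^3)) - \<eta>"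
      unfolding J_def using J_closed[OF \<tau> \<eta>(1) \<eta>(2)] by simp
    also have "\<dots> = 4 * exp (- \<tau> * \<eta>) / \<tau> - 2 / \<tau> - exp (- \<tau> * (2 * \<eta>)) * (\<eta> + 2 / \<tau>)"
      using \<tau> by (simp add: field_simps power2_eq_square power3_eq_cube)
    finally show "\<tau> * H \<tau> - \<eta> = 4 * exp (- \<tau> * \<eta>) / \<tau> - 2 / \<tau> - exp (- \<tau> * (2 * \<eta>)) * (\<eta> + 2 / \<tau>)" .
  qed
  have part1: "\<tau>\<^sup>2 / (4 * pi) *
          integral (ball p (T + \<eta>) - ball p (T - \<eta>))
            (\<lambda>y. exp (- \<tau> * dist x y) / dist x y *
                  (\<tau> * wave_v p \<eta> y T - deriv (\<lambda>t. wave_v p \<eta> y t) T))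
        = exp (- \<tau> * (T - \<eta>)) * H \<tau> * (sinh (\<tau> * dist x p) / dist x p)"
    if \<tau>: "0 < \<tau>" and x: "x \<in> ball p (T - \<eta>) - {p}" for \<tau> x
  proof -
    define a where "a = T - \<eta>"
    define b where "b = T + \<eta>"
    define d where "d = dist x p"
    have a: "0 < a" "a < b" "a < T" unfolding a_def b_def using \<eta> by auto
    have d: "0 < d" "d < a" using x unfolding d_def a_def by (auto simp: dist_commute)
    define f where "f = (\<lambda>y. exp (- \<tau> * dist x y) / dist x y * (\<tau> * Vf \<eta> T (dist y p) - Wf \<eta> T (dist y p)))"
    have step1: "integral (ball p b - ball p a)
            (\<lambda>y. exp (- \<tau> * dist x y) / dist x y *
                  (\<tau> * wave_v p \<eta> y T - deriv (\<lambda>t. wave_v p \<eta> y t) T)) = integral (ball p b - ball p a) f"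
    proof (rule integral_spike[of "sphere p T"])
      show "negligible (sphere p T)" by (rule negligible_sphere)
      fix y assume y: "y \<in> (ball p b - ball p a) - sphere p T"
      then have yp: "y \<noteq> p" and yT: "dist y p \<noteq> T"
        using a by (auto simp: dist_commute)
      have "wave_v p \<eta> y T = Vf \<eta> T (dist y p)"
        unfolding Vf_def using wave_v_formula[of T y p \<eta>] a yp by simp
      moreover have "deriv (\<lambda>t. wave_v p \<eta> y t) T = Wf \<eta> T (dist y p)"
        unfolding Wf_def using wave_v_deriv[of T y p \<eta>] a yp yT by simp
      ultimately show "f y = exp (- \<tau> * dist x y) / dist x y *
                  (\<tau> * wave_v p \<eta> y T - deriv (\<lambda>t. wave_v p \<eta> y t) T)"
        unfolding f_def by simp
    qed
    have Kd: "a \<le> dist y p \<and> dist y p \<le> b" if "y \<in> cball p b - ball p a" for y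
      using that by (auto simp: dist_commute)
    have xy: "0 < dist x y" if "y \<in> cball p b - ball p a" for y
    proof -
      have t: "dist y p \<le> dist y x + dist x p" by (rule dist_triangle)
      have c: "dist y x = dist x y" by (rule dist_commute)
      show ?thesis using t c Kd[OF that] d unfolding d_def by linarith
    qed
    have cf: "continuous_on (cball p b - ball p a) f"
      unfolding f_def
    proof (intro continuous_intros Vf_cont[OF a(1) less_imp_le[OF a(2)] Kd] Wf_cont)
      show "0 < T" using \<eta> by simp
      show "\<forall>y\<in>cball p b - ball p a. dist x y \<noteq> 0" using xy by force
      show "0 < dist y p" if "y \<in> cball p b - ball p a" for y using Kd[OF that] a by linarith
    qed
    have step2: "integral (ball p b - ball p a) f = integral {a..b} (\<lambda>\<rho>. integral {0..pi} (\<lambda>\<theta>.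
            integral {0..2*pi} (\<lambda>\<phi>. f (p + \<rho> *\<^sub>R sph_dir \<theta> \<phi>) * \<rho>^2 * sin \<theta>)))"
      by (rule polar(1)[OF a(1) a(2) cf])
    also have "\<dots> = integral {a..b} (\<lambda>\<rho>. (4 * pi * sinh (\<tau> * d) / (\<tau> * d)) * (\<rho> * (\<tau> * Vf \<eta> T \<rho> - Wf \<eta> T \<rho>) * exp (- \<tau> * \<rho>)))"
    proof (rule integral_cong)
      fix \<rho> assume \<rho>: "\<rho> \<in> {a..b}"
      then have rp: "0 < \<rho>" "d < \<rho>" using a d by auto
      define F where "F = \<tau> * Vf \<eta> T \<rho> - Wf \<eta> T \<rho>"
      define k where "k = (\<lambda>\<omega>. exp (- \<tau> * norm ((x - p) - \<rho> *\<^sub>R \<omega>)) / norm ((x - p) - \<rho> *\<^sub>R \<omega>))"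
      have fe: "f (p + \<rho> *\<^sub>R sph_dir \<theta> \<phi>) * \<rho>^2 * sin \<theta> = (k (sph_dir \<theta> \<phi>) * sin \<theta>) * (F * \<rho>^2)" for \<theta> \<phi>
      proof -
        have "dist (p + \<rho> *\<^sub>R sph_dir \<theta> \<phi>) p = \<rho>" using rp by (simp add: dist_norm)
        moreover have "dist x (p + \<rho> *\<^sub>R sph_dir \<theta> \<phi>) = norm ((x - p) - \<rho> *\<^sub>R sph_dir \<theta> \<phi>)"
          by (simp add: dist_norm algebra_simps)
        ultimately show ?thesis unfolding f_def k_def F_def by simp
      qed
      have "integral {0..pi} (\<lambda>\<theta>. integral {0..2*pi} (\<lambda>\<phi>. f (p + \<rho> *\<^sub>R sph_dir \<theta> \<phi>) * \<rho>^2 * sin \<theta>))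
          = sphS k * (F * \<rho>^2)"
        unfolding fe sphS_def by simp
      also have "sphS k = 4 * pi * exp (- \<tau> * \<rho>) * sinh (\<tau> * norm (x - p)) / (\<tau> * \<rho> * norm (x - p))"
        unfolding k_def
        by (rule kernel_sphS[OF \<tau>]) (use d rp in \<open>simp_all add: d_def dist_norm\<close>)
      also have "norm (x - p) = d" unfolding d_def by (simp add: dist_norm)
      finally have L: "integral {0..pi} (\<lambda>\<theta>. integral {0..2*pi} (\<lambda>\<phi>. f (p + \<rho> *\<^sub>R sph_dir \<theta> \<phi>) * \<rho>^2 * sin \<theta>))
          = 4 * pi * exp (- \<tau> * \<rho>) * sinh (\<tau> * d) / (\<tau> * \<rho> * d) * (F * \<rho>^2)" .
      have R: "4 * pi * exp (- \<tau> * \<rho>) * sinh (\<tau> * d) / (\<tau> * \<rho> * d) * (F * \<rho>^2)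
          = (4 * pi * sinh (\<tau> * d) / (\<tau> * d)) * (\<rho> * F * exp (- \<tau> * \<rho>))"
        using rp \<tau> d by (simp add: field_simps power2_eq_square)
      show "integral {0..pi} (\<lambda>\<theta>. integral {0..2*pi} (\<lambda>\<phi>. f (p + \<rho> *\<^sub>R sph_dir \<theta> \<phi>) * \<rho>^2 * sin \<theta>))
          = (4 * pi * sinh (\<tau> * d) / (\<tau> * d)) * (\<rho> * (\<tau> * Vf \<eta> T \<rho> - Wf \<eta> T \<rho>) * exp (- \<tau> * \<rho>))"
        using L R unfolding F_def by simp
    qed
    also have "\<dots> = (4 * pi * sinh (\<tau> * d) / (\<tau> * d)) * J \<tau>"
      unfolding J_def a_def b_def by simp
    finally have main: "integral (ball p b - ball p a) f = (4 * pi * sinh (\<tau> * d) / (\<tau> * d)) * J \<tau>" .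
    have ee: "exp (\<tau> * a) * exp (- (\<tau> * a)) = 1" by (simp flip: exp_add)
    show ?thesis
      unfolding a_def[symmetric] b_def[symmetric] d_def[symmetric] step1 main H_def
      using \<tau> d ee by (simp add: field_simps power2_eq_square)
  qed
  show ?thesis
    by (rule exI[of _ H]) (use part1 part2 in blast)
qed

end
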